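(* For an oriented, augmented, right-angled hexagon $(\vec{L}_1,\vec{F}_2,\vec{L}_3,\vec{F}_4,\vec{L}_5,\vec{F}_6)$ in $\mathbb{H}^4$ with any choice of $\{e_1,e_2\}$-quaternion half side-lengths $\delta_1,\delta_3,\delta_5$ and $e_2$-complex half side-lengths $\delta_2,\delta_4,\delta_6$, the following formulas hold: \begin{eqnarray*} & & \sinh\delta_1 \cosh\delta_2 \sinh\delta_3 + \cosh\delta_1 \cosh\delta_2 \cosh\delta_3 \\ &=& \varepsilon\,(\sinh\delta_4 \cosh\delta_5 \sinh\delta_6 + \cosh\delta_4 \cosh\delta_5 \cosh\delta_6)^*; \\ & & \sinh\delta_1 \cosh\delta_2 \cosh\delta_3 + \cosh\delta_1 \cosh\delta_2 \sinh\delta_3 \\ &=& \varepsilon\,(\sinh\delta_4 \sinh\delta_5 \sinh\delta_6 - \cosh\delta_4 \sinh\delta_5 \cosh\delta_6)^*; \\ & & \sinh\delta_1 \sinh\delta_2 \sinh\delta_3 - \cosh\delta_1 \sinh\delta_2 \cosh\delta_3 \\ &=& \varepsilon\,(\sinh\delta_4 \cosh\delta_5 \cosh\delta_6 + \cosh\delta_4 \cosh\delta_5 \sinh\delta_6)^*; \\ & & \sinh\delta_1 \sinh\delta_2 \cosh\delta_3 - \cosh\delta_1 \sinh\delta_2 \sinh\delta_3 \\ &=& \varepsilon\,(\sinh\delta_4 \sinh\delta_5 \cosh\delta_6 - \cosh\delta_4 \sinh\delta_5 \sinh\delta_6)^*, \end{eqnarray*} with $\varepsilon = 1$ or $-1$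 (the same $\varepsilon$ in all four identities), depending on the choices of the six half side-lengths $\{\delta_n\}_{n=1}^{6}$.
   Context: $\mathbb{A}_2$ is the Clifford algebra $\mathsf{Cl}_{0,2}$: the real associative algebra generated by $e_1,e_2$ with $e_1^2=e_2^2=-1$, $e_1e_2+e_2e_1=0$ (isomorphic to the quaternions). Its reverse involution is $(x_0+x_1e_1+x_2e_2+x_{12}e_1e_2)^*=x_0+x_1e_1+x_2e_2-x_{12}e_1e_2$, and $(ab)^*=b^*a^*$. For $x\in\mathbb{A}_2$, $\exp x=\sum_{m\ge0}x^m/m!$, $\cosh x=(\exp x+\exp(-x^* ))/2$, $\sinh x=(\exp x-\exp(-x^* ))/2$; $\log$ denotes the multivalued inverse of $\exp$. A nonzero $a\in\mathbb{A}_2$ is written $a=|a|(\cos\theta+u\sin\theta)$ with $u$ a unit element with zero real part ($u^2=-1$; unique up to sign if $a\notin\mathbb{R}$, arbitrary if $a\in\mathbb{R}$); its periods are $2m\pi u$, $m\in\mathbb{Z}$. $\mathbb{H}^4$ is the upper half-space $\{x_0+x_1e_1+x_2e_2+x_3e_3: x_3>0\}$ (inside the Clifford algebra $\mathsf{Cl}_{0,3}$) with boundary $(\mathbb{R}+\mathbb{R}e_1+\mathbb{R}e_2)\cup\{\infty\}$, oriented by the ordered frame at $e_3$ given by the oriented geodesics from $-1$ to $1$, $-e_1$ to $e_1$, $-e_2$ to $e_2$, $0$ to $\infty$. Orientation-preserving isometries of $\mathbb{H}^4$ are the Möbius maps $x\mapsto(ax+b)(cx+d)^{-1}$ given by Vahlen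 matrices $\pm\begin{pmatrix}a&b\\c&d\end{pmatrix}$ with $a,b,c,d\in\mathbb{A}_2$, $ad^*-bc^*=1$, $ab^*,cd^*\in\mathbb{R}+\mathbb{R}e_1+\mathbb{R}e_2$. Write $\vec{L}_{[u,v]}$ for the geodesic from $u$ to $v$; $\vec{L}_{\rm v}=\vec{L}_{[0,\infty]}$; $\vec{F}_{\rm h}=(\vec{L}_{[-1,1]},\vec{\Pi}_{\rm h})$ where $\vec{\Pi}_{\rm h}$ is the plane containing $L_{[-1,1]}$ and $L_{[-e_1,e_1]}$ oriented by this ordered pair. A flag $(L,\Pi)$ is a line $L$ contained in a totally geodesic plane $\Pi$; an oriented flag has both oriented. A line $L'$ and a flag $(L,\Pi)$ are orthogonal if $L'$ meets $L$ and is perpendicular to $\Pi$. An oriented augmented right-angled hexagon $(\vec{L}_1,\vec{F}_2,\vec{L}_3,\vec{F}_4,\vec{L}_5,\vec{F}_6)$ consists of oriented lines $\vec{L}_1,\vec{L}_3,\vec{L}_5$ and oriented flags $\vec{F}_n=(\vec{L}_n,\vec{\Pi}_n)$, $n=2,4,6$, with each consecutive pair (indices mod 6) orthogonal. For $n=1,3,5$: let $\iota$ be the orientation-preserving isometry with $\iota(\vec{L}_n)=\vec{L}_{\rm v}$, $\iota(\vec{F}_{n-1})=\vec{F}_{\rm h}$; the orientation-preserving isometry fixing $\vec{L}_{\rm v}$ and sending $\vec{F}_{\rm h}$ to $\iota(\vec{F}_{n+1})$ has Vahlen matrices $\pm\mathrm{diag}(a,(a^* )^{-1})$; a quaternion half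 side-length is $\delta_n\in\log(\pm a)$, taken modulo period. For $n=2,4,6$: let $\iota$ satisfy $\iota(\vec{F}_n)=\vec{F}_{\rm h}$, $\iota(\vec{L}_{n-1})=\vec{L}_{\rm v}$; the orientation-preserving isometry preserving $\vec{F}_{\rm h}$ and sending $\vec{L}_{\rm v}$ to $\iota(\vec{L}_{n+1})$ has Vahlen matrices $\pm\begin{pmatrix}\cosh\delta_n&\sinh\delta_n\\ \sinh\delta_n&\cosh\delta_n\end{pmatrix}$ with $\delta_n\in\mathbb{R}+\mathbb{R}e_2$ modulo $2\pi e_2$, determined up to adding $\pi e_2$; this is an $e_2$-complex half side-length. *)

theory Defs
  imports Complex_Main
begin

section \<open>The algebra A_2 = Cl_{0,2} (components along 1, e1, e2, e1e2)\<close>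

datatype quat = Q (c0: real) (c1: real) (c2: real) (c12: real)

instantiation quat :: "{zero, one, plus, minus, uminus, times}"
begin
definition "0 = Q 0 0 0 0"
definition "1 = Q 1 0 0 0"
definition "x + y = Q (c0 x + c0 y) (c1 x + c1 y) (c2 x + c2 y) (c12 x + c12 y)"
definition "x - y = Q (c0 x - c0 y) (c1 x - c1 y) (c2 x - c2 y) (c12 x - c12 y)"
definition "- x = Q (- c0 x) (- c1 x) (- c2 x) (- c12 x)"
text \<open>Clifford product with e1^2 = e2^2 = -1, e1 e2 = - e2 e1.\<close>
definition "x * y = Q
   (c0 x * c0 y - c1 x * c1 y - c2 x * c2 y - c12 x * c12 y)
   (c0 x * c1 y + c1 x * c0 y + c2 x * c12 y - c12 x * c2 y)
   (c0 x * c2 y - c1 x * c12 y + c2 x * c0 y + c12 x * c1 y)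
   (c0 x * c12 y + c1 x * c2 y - c2 x * c1 y + c12 x * c0 y)"
instance ..
end

instance quat :: power ..

definition qscale :: "real \<Rightarrow> quat \<Rightarrow> quat" where
  "qscale r x = Q (r * c0 x) (r * c1 x) (r * c2 x) (r * c12 x)"

text \<open>Reverse involution: (x0 + x1 e1 + x2 e2 + x12 e1e2)^* = x0 + x1 e1 + x2 e2 - x12 e1e2.\<close>
definition qrev :: "quat \<Rightarrow> quat" where
  "qrev x = Q (c0 x) (c1 x) (c2 x) (- c12 x)"

text \<open>Multiplicative inverse (0 for 0).\<close>
definition qinv :: "quat \<Rightarrow> quat" where
  "qinv x = (let n = (c0 x)\<^sup>2 + (c1 x)\<^sup>2 + (c2 x)\<^sup>2 + (c12 x)\<^sup>2 in
     Q (c0 x / n) (- c1 x / n) (- c2 x / n) (- c12 x / n))"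

definition qexp :: "quat \<Rightarrow> quat" where
  "qexp x = Q (\<Sum>m. c0 (x ^ m) / fact m) (\<Sum>m. c1 (x ^ m) / fact m)
              (\<Sum>m. c2 (x ^ m) / fact m) (\<Sum>m. c12 (x ^ m) / fact m)"

definition qcosh :: "quat \<Rightarrow> quat" where
  "qcosh x = qscale (1/2) (qexp x + qexp (- qrev x))"

definition qsinh :: "quat \<Rightarrow> quat" where
  "qsinh x = qscale (1/2) (qexp x - qexp (- qrev x))"

section \<open>Boundary of H^4: (R + R e1 + R e2) \<union> {\<infinity>}\<close>

datatype bpt = Fin real real real | Inf

fun pv :: "bpt \<Rightarrow> quat" where
  "pv (Fin a b c) = Q a b c 0"
| "pv Inf = 0"

definition of_pv :: "quat \<Rightarrow> bpt" where
  "of_pv q = Fin (c0 q) (c1 q) (c2 q)"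

section \<open>Vahlen matrices and Moebius maps (orientation-preserving isometries of H^4)\<close>

type_synonym vmat = "quat \<times> quat \<times> quat \<times> quat"  \<comment> \<open>(a,b,c,d) = [[a,b],[c,d]]\<close>

definition vahlen :: "vmat \<Rightarrow> bool" where
  "vahlen M = (case M of (a, b, c, d) \<Rightarrow>
     a * qrev d - b * qrev c = 1 \<and> c12 (a * qrev b) = 0 \<and> c12 (c * qrev d) = 0)"

text \<open>Boundary action x \<mapsto> (a x + b)(c x + d)^{-1}; an orientation-preserving isometry
  of H^4 is determined by its boundary action.\<close>
fun mob :: "vmat \<Rightarrow> bpt \<Rightarrow> bpt" where
  "mob (a, b, c, d) Inf = (if c = 0 then Inf else of_pv (a * qinv c))"
| "mob (a, b, c, d) (Fin x y z) =
     (let p = pv (Fin x y z); den = c * p + d in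
      if den = 0 then Inf else of_pv ((a * p + b) * qinv den))"

text \<open>Oriented geodesic = (initial endpoint, terminal endpoint).\<close>
type_synonym oline = "bpt \<times> bpt"

definition is_oline :: "oline \<Rightarrow> bool" where
  "is_oline L \<longleftrightarrow> fst L \<noteq> snd L"

text \<open>Oriented flag (L,\<Pi>) = (initial endpoint of L, terminal endpoint of L, A), where A is
  the open boundary arc (of the boundary circle of \<Pi>) bounding the half-plane of \<Pi> into
  which the second vector of a positive frame (tangent of L, normal) points.\<close>
type_synonym oflag = "bpt \<times> bpt \<times> bpt set"

definition Lv :: oline where "Lv = (Fin 0 0 0, Inf)"

text \<open>F_h = (L_{[-1,1]}, \<Pi>_h), \<Pi>_h oriented by (L_{[-1,1]}, L_{[-e1,e1]}): the half-plane
  is the one containing L_{[0,e1]}-direction, i.e. the arc of the unit circle with x1 > 0.\<close>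
definition Fh :: oflag where
  "Fh = (Fin (-1) 0 0, Fin 1 0 0, {Fin x y 0 | x y. x\<^sup>2 + y\<^sup>2 = 1 \<and> y > 0})"

definition line_img :: "(bpt \<Rightarrow> bpt) \<Rightarrow> oline \<Rightarrow> oline" where
  "line_img g L = (g (fst L), g (snd L))"

definition flag_img :: "(bpt \<Rightarrow> bpt) \<Rightarrow> oflag \<Rightarrow> oflag" where
  "flag_img g F = (case F of (u, v, A) \<Rightarrow> (g u, g v, g ` A))"

definition is_oflag :: "oflag \<Rightarrow> bool" where
  "is_oflag F \<longleftrightarrow> (\<exists>M. vahlen M \<and> flag_img (mob M) Fh = F)"

text \<open>A line L and a flag F are orthogonal iff, after moving F to F_h by an
  orientation-preserving isometry, L is a geodesic through the point e3 of L_{[-1,1]}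
  perpendicular to \<Pi>_h (x2 = 0), i.e. lying in the (x2,x3) vertical half-plane through e3:
  either L_{[0,\<infinity>]} or the semicircle with endpoints t e2, -(1/t) e2.\<close>
definition orth :: "oline \<Rightarrow> oflag \<Rightarrow> bool" where
  "orth L F \<longleftrightarrow> (\<exists>M. vahlen M \<and> flag_img (mob M) Fh = F \<and>
      ({fst L, snd L} = mob M ` {Fin 0 0 0, Inf} \<or>
       (\<exists>t. t \<noteq> 0 \<and> {fst L, snd L} = mob M ` {Fin 0 0 t, Fin 0 0 (- 1 / t)})))"

text \<open>{e1,e2}-quaternion half side-length \<delta>_n (n odd) of the side L_n between F_{n-1}, F_{n+1}:
  \<iota>(L_n) = L_v, \<iota>(F_{n-1}) = F_h; the isometry fixing L_v sending F_h to \<iota>(F_{n+1}) has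
  Vahlen matrix \<plusminus>diag(a, (a^*)^{-1}); \<delta> \<in> log(\<plusminus>a).\<close>
definition quat_hsl :: "oflag \<Rightarrow> oline \<Rightarrow> oflag \<Rightarrow> quat \<Rightarrow> bool" where
  "quat_hsl Fp L Fn \<delta> \<longleftrightarrow> (\<exists>Mi a.
      vahlen Mi \<and> line_img (mob Mi) L = Lv \<and> flag_img (mob Mi) Fp = Fh \<and>
      vahlen (a, 0, 0, qinv (qrev a)) \<and>
      line_img (mob (a, 0, 0, qinv (qrev a))) Lv = Lv \<and>
      flag_img (mob (a, 0, 0, qinv (qrev a))) Fh = flag_img (mob Mi) Fn \<and>
      (qexp \<delta> = a \<or> qexp \<delta> = - a))"

definition cplx_hsl :: "oline \<Rightarrow> oflag \<Rightarrow> oline \<Rightarrow> quat \<Rightarrow> bool" where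
  "cplx_hsl Lp F Ln \<delta> \<longleftrightarrow> c1 \<delta> = 0 \<and> c12 \<delta> = 0 \<and> (\<exists>Mi.
      vahlen Mi \<and> flag_img (mob Mi) F = Fh \<and> line_img (mob Mi) Lp = Lv \<and>
      vahlen (qcosh \<delta>, qsinh \<delta>, qsinh \<delta>, qcosh \<delta>) \<and>
      flag_img (mob (qcosh \<delta>, qsinh \<delta>, qsinh \<delta>, qcosh \<delta>)) Fh = Fh \<and>
      line_img (mob (qcosh \<delta>, qsinh \<delta>, qsinh \<delta>, qcosh \<delta>)) Lv = line_img (mob Mi) Ln)"

end

theory Submission
  imports Defs
begin


lemma quat_eq_iff: "x = y \<longleftrightarrow> c0 x = c0 y \<and> c1 x = c1 y \<and> c2 x = c2 y \<and> c12 x = c12 y"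
  by (cases x; cases y) auto

lemmas qdefs = zero_quat_def one_quat_def plus_quat_def minus_quat_def uminus_quat_def times_quat_def

lemma qsel[simp]:
  "c0 0 = 0" "c1 0 = 0" "c2 0 = 0" "c12 0 = 0"
  "c0 1 = 1" "c1 1 = 0" "c2 1 = 0" "c12 1 = 0"
  "c0 (x+y) = c0 x + c0 y" "c1 (x+y) = c1 x + c1 y" "c2 (x+y) = c2 x + c2 y" "c12 (x+y) = c12 x + c12 y"
  "c0 (x-y) = c0 x - c0 y" "c1 (x-y) = c1 x - c1 y" "c2 (x-y) = c2 x - c2 y" "c12 (x-y) = c12 x - c12 y"
  "c0 (-x) = - c0 x" "c1 (-x) = - c1 x" "c2 (-x) = - c2 x" "c12 (-x) = - c12 x"
  "c0 (x*y) = c0 x * c0 y - c1 x * c1 y - c2 x * c2 y - c12 x * c12 y"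
  "c1 (x*y) = c0 x * c1 y + c1 x * c0 y + c2 x * c12 y - c12 x * c2 y"
  "c2 (x*y) = c0 x * c2 y - c1 x * c12 y + c2 x * c0 y + c12 x * c1 y"
  "c12 (x*y) = c0 x * c12 y + c1 x * c2 y - c2 x * c1 y + c12 x * c0 y"
  by (simp_all add: qdefs)

lemma sqrt4_tri:
  fixes a b c d e f g h :: real
  shows "sqrt ((a+e)\<^sup>2 + (b+f)\<^sup>2 + ((c+g)\<^sup>2 + (d+h)\<^sup>2))
      \<le> sqrt (a\<^sup>2 + b\<^sup>2 + (c\<^sup>2 + d\<^sup>2)) + sqrt (e\<^sup>2 + f\<^sup>2 + (g\<^sup>2 + h\<^sup>2))"
proof -
  define p1 where "p1 = sqrt (a\<^sup>2+b\<^sup>2)"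
  define p2 where "p2 = sqrt (c\<^sup>2+d\<^sup>2)"
  define q1 where "q1 = sqrt (e\<^sup>2+f\<^sup>2)"
  define q2 where "q2 = sqrt (g\<^sup>2+h\<^sup>2)"
  define u where "u = sqrt ((a+e)\<^sup>2 + (b+f)\<^sup>2)"
  define v where "v = sqrt ((c+g)\<^sup>2 + (d+h)\<^sup>2)"
  have u: "0 \<le> u" "u \<le> p1 + q1" unfolding u_def p1_def q1_def
    by (auto intro: real_sqrt_sum_squares_triangle_ineq)
  have v: "0 \<le> v" "v \<le> p2 + q2" unfolding v_def p2_def q2_def
    by (auto intro: real_sqrt_sum_squares_triangle_ineq)
  have "(a+e)\<^sup>2 + (b+f)\<^sup>2 + ((c+g)\<^sup>2 + (d+h)\<^sup>2) = u\<^sup>2 + v\<^sup>2"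
    unfolding u_def v_def by simp
  moreover have "u\<^sup>2 + v\<^sup>2 \<le> (p1+q1)\<^sup>2 + (p2+q2)\<^sup>2"
    using u v by (intro add_mono power_mono) auto
  ultimately have "sqrt ((a+e)\<^sup>2 + (b+f)\<^sup>2 + ((c+g)\<^sup>2 + (d+h)\<^sup>2)) \<le> sqrt ((p1+q1)\<^sup>2 + (p2+q2)\<^sup>2)"
    by simp
  also have "\<dots> \<le> sqrt (p1\<^sup>2 + p2\<^sup>2) + sqrt (q1\<^sup>2 + q2\<^sup>2)"
    by (rule real_sqrt_sum_squares_triangle_ineq)
  also have "p1\<^sup>2 + p2\<^sup>2 = a\<^sup>2 + b\<^sup>2 + (c\<^sup>2 + d\<^sup>2)" unfolding p1_def p2_def by simp
  also have "q1\<^sup>2 + q2\<^sup>2 = e\<^sup>2 + f\<^sup>2 + (g\<^sup>2 + h\<^sup>2)" unfolding q1_def q2_def by simp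
  finally show ?thesis .
qed

instance quat :: ring_1
  by standard (simp_all add: quat_eq_iff algebra_simps)

instantiation quat :: real_algebra_1
begin
definition scaleR_quat_def: "scaleR r x = Q (r * c0 x) (r * c1 x) (r * c2 x) (r * c12 x)"
instance
  by standard (simp_all add: quat_eq_iff algebra_simps scaleR_quat_def)
end

lemma qsel_scaleR[simp]: "c0 (r *\<^sub>R x) = r * c0 x" "c1 (r *\<^sub>R x) = r * c1 x"
  "c2 (r *\<^sub>R x) = r * c2 x" "c12 (r *\<^sub>R x) = r * c12 x"
  by (simp_all add: scaleR_quat_def)

instantiation quat :: real_normed_algebra_1
begin
definition norm_quat_def: "norm x = sqrt ((c0 x)\<^sup>2 + (c1 x)\<^sup>2 + (c2 x)\<^sup>2 + (c12 x)\<^sup>2)"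
definition sgn_quat_def: "sgn (x::quat) = x /\<^sub>R norm x"
definition dist_quat_def: "dist (x::quat) y = norm (x - y)"
definition uniformity_quat_def:
  "(uniformity :: (quat \<times> quat) filter) = (INF e\<in>{0 <..}. principal {(x, y). dist x y < e})"
definition open_quat_def:
  "open (U :: quat set) \<longleftrightarrow> (\<forall>x\<in>U. eventually (\<lambda>(x', y). x' = x \<longrightarrow> y \<in> U) uniformity)"

instance
proof
  fix r a :: real and x y :: quat
  show "norm (1::quat) = 1" by (simp add: norm_quat_def)
  show "(norm x = 0) = (x = 0)" by (simp add: norm_quat_def quat_eq_iff add_nonneg_eq_0_iff)
  show "norm (x + y) \<le> norm x + norm y"
  proof -
    have "sqrt ((c0 x + c0 y)\<^sup>2 + (c1 x + c1 y)\<^sup>2 + ((c2 x + c2 y)\<^sup>2 + (c12 x + c12 y)\<^sup>2))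
      \<le> sqrt ((c0 x)\<^sup>2 + (c1 x)\<^sup>2 + ((c2 x)\<^sup>2 + (c12 x)\<^sup>2)) + sqrt ((c0 y)\<^sup>2 + (c1 y)\<^sup>2 + ((c2 y)\<^sup>2 + (c12 y)\<^sup>2))"
      by (rule sqrt4_tri)
    then show ?thesis by (simp add: norm_quat_def add.assoc)
  qed
  show "norm (r *\<^sub>R x) = \<bar>r\<bar> * norm x"
    by (simp add: norm_quat_def power_mult_distrib distrib_left [symmetric] real_sqrt_mult)
  show "norm (x * y) \<le> norm x * norm y"
  proof -
    have "norm (x*y) = norm x * norm y"
      unfolding norm_quat_def real_sqrt_mult[symmetric]
      by (rule arg_cong[where f=sqrt]) (simp add: power2_eq_square algebra_simps)
    then show ?thesis by simp
  qed
qed (rule sgn_quat_def dist_quat_def open_quat_def uniformity_quat_def)+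
end


lemma abs_le_qnorm: "\<bar>c0 x\<bar> \<le> norm x" "\<bar>c1 x\<bar> \<le> norm x" "\<bar>c2 x\<bar> \<le> norm x" "\<bar>c12 x\<bar> \<le> norm x"
  unfolding norm_quat_def by (simp_all add: real_sqrt_abs[symmetric] del: real_sqrt_abs)

lemma bl_c: "bounded_linear c0" "bounded_linear c1" "bounded_linear c2" "bounded_linear c12"
  by (auto intro!: bounded_linear_intro[where K=1] simp: abs_le_qnorm)

lemma tendsto_Q:
  assumes "(f \<longlongrightarrow> a) F" "(g \<longlongrightarrow> b) F" "(h \<longlongrightarrow> c) F" "(k \<longlongrightarrow> d) F"
  shows "((\<lambda>n. Q (f n) (g n) (h n) (k n)) \<longlongrightarrow> Q a b c d) F"
proof -
  have eq: "\<And>a b c d. Q a b c d = a *\<^sub>R Q 1 0 0 0 + b *\<^sub>R Q 0 1 0 0 + c *\<^sub>R Q 0 0 1 0 + d *\<^sub>R Q 0 0 0 1"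
    by (simp add: quat_eq_iff)
  have "((\<lambda>n. f n *\<^sub>R Q 1 0 0 0 + g n *\<^sub>R Q 0 1 0 0 + h n *\<^sub>R Q 0 0 1 0 + k n *\<^sub>R Q 0 0 0 1)
     \<longlongrightarrow> a *\<^sub>R Q 1 0 0 0 + b *\<^sub>R Q 0 1 0 0 + c *\<^sub>R Q 0 0 1 0 + d *\<^sub>R Q 0 0 0 1) F"
    by (intro tendsto_intros assms)
  then show ?thesis by (simp only: eq[symmetric])
qed

instance quat :: banach
proof
  fix X :: "nat \<Rightarrow> quat"
  assume X: "Cauchy X"
  have C: "Cauchy (\<lambda>n. c0 (X n))" "Cauchy (\<lambda>n. c1 (X n))" "Cauchy (\<lambda>n. c2 (X n))" "Cauchy (\<lambda>n. c12 (X n))"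
    using X bl_c by (auto intro: bounded_linear.Cauchy)
  have "(\<lambda>n. Q (c0 (X n)) (c1 (X n)) (c2 (X n)) (c12 (X n))) \<longlonglongrightarrow>
    Q (lim (\<lambda>n. c0 (X n))) (lim (\<lambda>n. c1 (X n))) (lim (\<lambda>n. c2 (X n))) (lim (\<lambda>n. c12 (X n)))"
    by (intro tendsto_Q convergent_LIMSEQ_iff[THEN iffD1] Cauchy_convergent_iff[THEN iffD1] C)
  then show "convergent X"
    unfolding quat.collapse by (rule convergentI)
qed

lemma qexp_exp: "qexp x = exp x"
proof -
  have s: "summable (\<lambda>n. inverse (fact n) *\<^sub>R x ^ n)" by (rule summable_exp_generic)
  have "\<And>f. bounded_linear f \<Longrightarrow> (\<And>r y. f (r *\<^sub>R y) = r * f y) \<Longrightarrow> f (exp x) = (\<Sum>n. f (x^n) / fact n)"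
    unfolding exp_def
    by (subst bounded_linear.suminf[OF _ s], assumption)
       (simp add: divide_inverse mult.commute)
  from this[OF bl_c(1)] this[OF bl_c(2)] this[OF bl_c(3)] this[OF bl_c(4)] qsel_scaleR
  show ?thesis unfolding qexp_def by (simp add: quat_eq_iff)
qed



lemma qrev_sel[simp]: "c0 (qrev x) = c0 x" "c1 (qrev x) = c1 x" "c2 (qrev x) = c2 x" "c12 (qrev x) = - c12 x"
  by (simp_all add: qrev_def)

lemma qrev_mult: "qrev (x*y) = qrev y * qrev x" by (simp add: quat_eq_iff)
lemma qrev_add[simp]: "qrev (x+y) = qrev x + qrev y" by (simp add: quat_eq_iff)
lemma qrev_diff[simp]: "qrev (x-y) = qrev x - qrev y" by (simp add: quat_eq_iff)
lemma qrev_uminus[simp]: "qrev (-x) = - qrev x" by (simp add: quat_eq_iff)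
lemma qrev_one[simp]: "qrev 1 = 1" by (simp add: quat_eq_iff)
lemma qrev_zero[simp]: "qrev 0 = 0" by (simp add: quat_eq_iff)
lemma qrev_qrev[simp]: "qrev (qrev x) = x" by (simp add: quat_eq_iff)
lemma qrev_scaleR[simp]: "qrev (r *\<^sub>R x) = r *\<^sub>R qrev x" by (simp add: quat_eq_iff)
lemma qrev_eq_0[simp]: "qrev x = 0 \<longleftrightarrow> x = 0" by (simp add: quat_eq_iff)
lemma qrev_inj: "qrev x = qrev y \<longleftrightarrow> x = y" by (simp add: quat_eq_iff)
lemma para_iff: "qrev x = x \<longleftrightarrow> c12 x = 0" by (simp add: quat_eq_iff)

lemma qrev_power: "qrev (x ^ n) = (qrev x) ^ n"
  by (induction n) (simp_all add: qrev_mult power_commutes)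

lemma bl_qrev: "bounded_linear qrev"
  by (rule bounded_linear_intro[where K=1]) (simp_all add: quat_eq_iff norm_quat_def)

lemma qrev_exp: "qrev (exp x) = exp (qrev x)"
proof -
  have s: "summable (\<lambda>n. inverse (fact n) *\<^sub>R x ^ n)" by (rule summable_exp_generic)
  show ?thesis unfolding exp_def
    by (subst bounded_linear.suminf[OF bl_qrev s]) (simp add: qrev_power)
qed

lemma exp_inv1: "exp (x::quat) * exp (- x) = 1"
  by (subst exp_add_commuting[symmetric]) simp_all
lemma exp_inv2: "exp (- x) * exp (x::quat) = 1"
  by (subst exp_add_commuting[symmetric]) simp_all

lemma qnorm2_nz: "x \<noteq> 0 \<Longrightarrow> (c0 x)\<^sup>2 + (c1 x)\<^sup>2 + (c2 x)\<^sup>2 + (c12 x)\<^sup>2 \<noteq> 0"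
  by (auto simp: quat_eq_iff add_nonneg_eq_0_iff)

definition qconj :: "quat \<Rightarrow> quat" where "qconj x = Q (c0 x) (- c1 x) (- c2 x) (- c12 x)"
definition qn2 :: "quat \<Rightarrow> real" where "qn2 x = (c0 x)\<^sup>2 + (c1 x)\<^sup>2 + (c2 x)\<^sup>2 + (c12 x)\<^sup>2"

lemma qinv_alt: "qinv x = (1 / qn2 x) *\<^sub>R qconj x"
  by (simp add: quat_eq_iff qinv_def Let_def qn2_def qconj_def)

lemma qconj_r: "x * qconj x = qn2 x *\<^sub>R 1" and qconj_l: "qconj x * x = qn2 x *\<^sub>R 1"
  by (simp_all add: quat_eq_iff qn2_def qconj_def power2_eq_square algebra_simps)

lemma qinv_r: "x \<noteq> 0 \<Longrightarrow> x * qinv x = 1"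
  using qnorm2_nz[of x] by (simp add: qinv_alt qconj_r qn2_def)
lemma qinv_l: "x \<noteq> 0 \<Longrightarrow> qinv x * x = 1"
  using qnorm2_nz[of x] by (simp add: qinv_alt qconj_l qn2_def)

lemma no_zero_div: "x * y = (0::quat) \<Longrightarrow> x = 0 \<or> y = 0"
proof (rule ccontr)
  assume xy: "x * y = 0" and nz: "\<not> (x = 0 \<or> y = 0)"
  have "qinv x * (x * y) = y" using qinv_l[of x] nz by (simp add: mult.assoc[symmetric])
  with xy nz show False by simp
qed

lemma inv_unique_l: "z * y = 1 \<Longrightarrow> y \<noteq> 0 \<Longrightarrow> qinv y = (z::quat)"
proof -
  assume "z * y = 1" "y \<noteq> 0"
  then have "z = z * (y * qinv y)" by (simp add: qinv_r)
  also have "\<dots> = qinv y" by (simp add: mult.assoc[symmetric] \<open>z * y = 1\<close>)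
  finally show ?thesis by simp
qed

lemma exp_nz: "exp (x::quat) \<noteq> 0"
  using exp_inv1[of x] by auto

lemma qinv_qrev_exp: "qinv (qrev (qexp d)) = qexp (- qrev d)"
  unfolding qexp_exp qrev_exp
  by (rule inv_unique_l) (simp_all add: exp_inv2 exp_nz)

lemma qcosh_plus_sinh: "qcosh x + qsinh x = qexp x"
  by (simp add: quat_eq_iff qcosh_def qsinh_def qscale_def field_simps)
lemma qcosh_minus_sinh: "qcosh x - qsinh x = qexp (- qrev x)"
  by (simp add: quat_eq_iff qcosh_def qsinh_def qscale_def field_simps)



fun mm :: "vmat \<Rightarrow> vmat \<Rightarrow> vmat" where
  "mm (a,b,c,d) (a',b',c',d') = (a*a'+b*c', a*b'+b*d', c*a'+d*c', c*b'+d*d')"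
fun vadj :: "vmat \<Rightarrow> vmat" where
  "vadj (a,b,c,d) = (qrev d, - qrev b, - qrev c, qrev a)"
definition vI :: vmat where "vI = (1,0,0,1)"

lemma mm_assoc: "mm (mm A B) C = mm A (mm B C)"
  by (cases A rule: prod_cases4; cases B rule: prod_cases4; cases C rule: prod_cases4)
     (simp add: algebra_simps)
lemma mm_vI[simp]: "mm vI A = A" "mm A vI = A"
  by (cases A rule: prod_cases4; simp add: vI_def)+
lemma vadj_mm: "vadj (mm A B) = mm (vadj B) (vadj A)"
  by (cases A rule: prod_cases4; cases B rule: prod_cases4) (simp add: algebra_simps qrev_mult)
lemma vadj_vadj[simp]: "vadj (vadj A) = A"
  by (cases A rule: prod_cases4) simp
lemma vadj_vI[simp]: "vadj vI = vI" by (simp add: vI_def)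

lemma vahlen_iff: "vahlen M \<longleftrightarrow> mm M (vadj M) = vI"
proof (cases M rule: prod_cases4)
  case (fields a b c d)
  have e1: "c12 (a * qrev b) = 0 \<longleftrightarrow> a * qrev b = b * qrev a"
    using para_iff[of "a * qrev b"] by (auto simp: qrev_mult)
  have e2: "c12 (c * qrev d) = 0 \<longleftrightarrow> c * qrev d = d * qrev c"
    using para_iff[of "c * qrev d"] by (auto simp: qrev_mult)
  have e3: "a * qrev d - b * qrev c = 1 \<Longrightarrow> d * qrev a - c * qrev b = 1"
    by (metis qrev_diff qrev_mult qrev_one qrev_qrev)
  show ?thesis using fields e1 e2 e3
    by (auto simp: vahlen_def vI_def)
qed

lemma paraP1: "qrev y = y \<Longrightarrow> qrev (x * y * qrev x) = x * y * qrev x"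
  by (simp add: qrev_mult mult.assoc)

lemma inv_cancel: "x * y = 1 \<Longrightarrow> x * (y * z) = (z::quat)"
  by (simp add: mult.assoc[symmetric])

lemma vahlen_left_aux:
  fixes a b c d :: quat
  assumes h1: "a * qrev d - b * qrev c = 1" and h2: "a * qrev b = b * qrev a"
    and h3: "c * qrev d = d * qrev c"
  shows "qrev d * a - qrev b * c = 1 \<and> qrev d * b = qrev b * d \<and> qrev a * c = qrev c * a"
proof (cases "a = 0")
  case False
  define ai where "ai = qinv a"
  have aai: "a * ai = 1" "ai * a = 1" using False by (simp_all add: ai_def qinv_r qinv_l)
  have raai: "qrev a * qrev ai = 1" "qrev ai * qrev a = 1"
    using aai by (metis qrev_mult qrev_one)+
  note cc = inv_cancel[OF aai(1)] inv_cancel[OF aai(2)] inv_cancel[OF raai(1)] inv_cancel[OF raai(2)]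
  have dstar: "qrev d = ai + ai * (b * qrev c)"
  proof -
    have "a * qrev d = 1 + b * qrev c" using h1 by (simp add: algebra_simps)
    then have "ai * (a * qrev d) = ai * (1 + b * qrev c)" by simp
    then show ?thesis by (simp add: cc distrib_left)
  qed
  define Y where "Y = ai * b"
  have Yp: "qrev Y = Y"
  proof -
    have "ai * (a * qrev b) * qrev ai = ai * (b * qrev a) * qrev ai" using h2 by simp
    then have "qrev b * qrev ai = ai * b"
      by (simp add: mult.assoc cc aai raai)
    then show ?thesis by (simp add: Y_def qrev_mult)
  qed
  have bY: "b = a * Y" by (simp add: Y_def cc)
  have rbY: "qrev b = Y * qrev a" using bY Yp by (simp add: qrev_mult)
  define X where "X = c * ai"
  have cX: "c = X * a" by (simp add: X_def mult.assoc aai)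
  define W where "W = b * qrev a"
  have Wp: "qrev W = W" using h2 by (simp add: W_def qrev_mult)
  have cd: "c * qrev d = X + X * W * qrev X"
  proof -
    have "c * qrev d = X + X * b * qrev c" by (simp add: dstar X_def distrib_left mult.assoc)
    also have "X * b * qrev c = X * W * qrev X" by (simp add: cX qrev_mult W_def mult.assoc)
    finally show ?thesis .
  qed
  have cdp: "qrev (c * qrev d) = c * qrev d" using h3 by (simp add: qrev_mult)
  have Xp: "qrev X = X"
  proof -
    have e: "X = c * qrev d - X * W * qrev X" using cd by simp
    have "qrev X = qrev (c * qrev d - X * W * qrev X)" using arg_cong[OF e, of qrev] .
    also have "\<dots> = c * qrev d - X * W * qrev X" by (simp only: qrev_diff cdp paraP1[OF Wp])
    finally show ?thesis using e by simp
  qed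
  have g3: "qrev a * c = qrev c * a"
  proof -
    have "qrev a * c = qrev a * X * qrev (qrev a)" by (simp add: cX mult.assoc)
    then have "qrev (qrev a * c) = qrev a * c" using paraP1[OF Xp, of "qrev a"] by simp
    then show ?thesis by (simp add: qrev_mult)
  qed
  have g1: "qrev d * a - qrev b * c = 1"
  proof -
    have "qrev d * a = 1 + Y * (qrev c * a)" by (simp add: dstar distrib_right aai Y_def mult.assoc)
    moreover have "qrev b * c = Y * (qrev a * c)" by (simp add: rbY mult.assoc)
    ultimately show ?thesis using g3 by simp
  qed
  have g2: "qrev d * b = qrev b * d"
  proof -
    define Z where "Z = qrev c * a"
    have Zp: "qrev Z = Z" using g3 by (simp add: Z_def qrev_mult)
    have e1: "qrev d * b = Y + Y * (qrev c * b)" by (simp add: dstar distrib_right mult.assoc Y_def)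
    have e2: "qrev c * b = Z * Y" by (subst bY) (simp add: Z_def mult.assoc)
    have "qrev d * b = Y + Y * Z * qrev Y" by (simp add: e1 e2 Yp mult.assoc)
    then have "qrev (qrev d * b) = qrev d * b" using paraP1[OF Zp, of Y] by (simp add: Yp)
    then show ?thesis by (simp add: qrev_mult)
  qed
  show ?thesis using g1 g2 g3 by simp
next
  case True
  have hb: "b * qrev c = -1" using h1 True by (metis add.inverse_inverse diff_zero minus_diff_eq mult_zero_left)
  then have bnz: "b \<noteq> 0" by auto
  define bi where "bi = qinv b"
  have bbi: "b * bi = 1" "bi * b = 1" using bnz by (simp_all add: bi_def qinv_r qinv_l)
  have rc: "qrev c = - bi"
  proof -
    have "bi * (b * qrev c) = - bi" using hb by simp
    then show ?thesis by (simp add: inv_cancel[OF bbi(2)])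
  qed
  have c: "c = - qrev bi" using rc by (metis qrev_qrev qrev_uminus)
  have "qrev b * qrev bi = 1" using bbi(2) by (metis qrev_mult qrev_one)
  then have g1: "qrev d * a - qrev b * c = 1"
    using True c by simp
  define Z where "Z = d * bi"
  have dZ: "d = Z * b" by (simp add: Z_def mult.assoc bbi)
  have e: "c * qrev d = - qrev Z" by (simp add: c Z_def qrev_mult)
  have "qrev (c * qrev d) = c * qrev d" using h3 by (simp add: qrev_mult)
  then have "qrev (- qrev Z) = - qrev Z" by (simp only: e)
  then have Zp: "qrev Z = Z" by simp
  have g2: "qrev d * b = qrev b * d"
  proof -
    have "qrev d * b = qrev b * Z * qrev (qrev b)" by (simp add: dZ qrev_mult Zp mult.assoc)
    then have "qrev (qrev d * b) = qrev d * b" using paraP1[OF Zp, of "qrev b"] by simp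
    then show ?thesis by (simp add: qrev_mult)
  qed
  show ?thesis using g1 g2 True by simp
qed
lemma vahlen_left: "vahlen M \<Longrightarrow> mm (vadj M) M = vI"
proof (cases M rule: prod_cases4)
  case (fields a b c d)
  assume v: "vahlen M"
  then have "mm M (vadj M) = vI" by (simp add: vahlen_iff)
  then have h: "a * qrev d - b * qrev c = 1" "a * qrev b = b * qrev a" "c * qrev d = d * qrev c"
    using fields by (auto simp: vI_def algebra_simps)
  from vahlen_left_aux[OF h] have g: "qrev d * a - qrev b * c = 1" "qrev d * b = qrev b * d"
    "qrev a * c = qrev c * a" by auto
  have g4: "qrev a * d - qrev c * b = 1" using g(1) by (metis qrev_diff qrev_mult qrev_one qrev_qrev)
  show ?thesis using fields g g4 by (simp add: vI_def algebra_simps)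
qed

lemma vahlen_adj: "vahlen M \<Longrightarrow> vahlen (vadj M)"
  by (simp add: vahlen_iff vahlen_left)

lemma vahlen_mm: "vahlen A \<Longrightarrow> vahlen B \<Longrightarrow> vahlen (mm A B)"
  unfolding vahlen_iff vadj_mm
  by (metis mm_assoc mm_vI)



fun mv :: "vmat \<Rightarrow> quat \<times> quat \<Rightarrow> quat \<times> quat" where
  "mv (a,b,c,d) (s,t) = (a*s+b*t, c*s+d*t)"

fun ptp :: "quat \<times> quat \<Rightarrow> bpt" where
  "ptp (u, v) = (if v = 0 then Inf else of_pv (u * qinv v))"

lemma mv_mm: "mv (mm M N) st = mv M (mv N st)"
  by (cases M rule: prod_cases4; cases N rule: prod_cases4; cases st) (simp add: algebra_simps)
lemma mv_vI[simp]: "mv vI st = st"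
  by (cases st) (simp add: vI_def)

lemma qinv_mult: "x \<noteq> 0 \<Longrightarrow> y \<noteq> 0 \<Longrightarrow> qinv (x * y) = qinv y * qinv (x::quat)"
proof -
  assume x: "x \<noteq> 0" and y: "y \<noteq> 0"
  then have xy: "x * y \<noteq> 0" using no_zero_div by blast
  have "qinv y * qinv x * (x * y) = 1"
    using x y by (simp add: mult.assoc inv_cancel qinv_l)
  then show ?thesis using xy by (rule inv_unique_l)
qed

lemma ptp_scale: "s \<noteq> 0 \<Longrightarrow> ptp (x * s, y * s) = ptp (x, y)"
proof -
  assume s: "s \<noteq> 0"
  show ?thesis
  proof (cases "y = 0")
    case True then show ?thesis by simp
  next
    case False
    then have "y * s \<noteq> 0" using s no_zero_div by blast
    moreover have "x * s * qinv (y * s) = x * qinv y"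
      using s False by (simp add: qinv_mult mult.assoc inv_cancel qinv_r)
    ultimately show ?thesis using False by simp
  qed
qed

lemma pv_of_pv: "c12 q = 0 \<Longrightarrow> pv (of_pv q) = q"
  by (simp add: of_pv_def quat_eq_iff)

lemma mob_inf: "mob M Inf = ptp (mv M (1, 0))"
  by (cases M rule: prod_cases4) simp

lemma mob_of_pv: "c12 q = 0 \<Longrightarrow> mob M (of_pv q) = ptp (mv M (q, 1))"
proof -
  assume q: "c12 q = 0"
  then have e: "Q (c0 q) (c1 q) (c2 q) 0 = q" by (simp add: quat_eq_iff)
  show ?thesis by (cases M rule: prod_cases4) (simp add: of_pv_def e Let_def)
qed

lemma fin_of_pv: "Fin x y z = of_pv (Q x y z 0)" by (simp add: of_pv_def)

lemma para_q: "qrev (qrev v * u) = qrev v * u \<Longrightarrow> v \<noteq> 0 \<Longrightarrow> c12 (u * qinv v) = 0"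
proof -
  assume p: "qrev (qrev v * u) = qrev v * u" and v: "v \<noteq> 0"
  have rv: "qrev v \<noteq> 0" using v by simp
  have rw: "qrev (qinv (qrev v)) = qinv v"
  proof -
    have "qrev (qinv v) * qrev v = 1" using v by (metis qinv_r qrev_mult qrev_one)
    then have "qinv (qrev v) = qrev (qinv v)" using rv by (rule inv_unique_l)
    then show ?thesis by simp
  qed
  have "u * qinv v = qinv (qrev v) * (qrev v * u) * qrev (qinv (qrev v))"
    using rv by (simp add: rw mult.assoc[symmetric] qinv_l)
  then have "qrev (u * qinv v) = u * qinv v" using paraP1[OF p, of "qinv (qrev v)"] by simp
  then show ?thesis by (simp add: para_iff)
qed

lemma para_mv:
  assumes N: "vahlen N" and st: "qrev (qrev t * s) = qrev t * s" and uv: "mv N (s,t) = (u,v)"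
  shows "qrev (qrev v * u) = qrev v * u"
proof (cases N rule: prod_cases4)
  case (fields a b c d)
  from vahlen_left[OF N] fields have h:
    "qrev d * a - qrev b * c = 1" "qrev d * b - qrev b * d = 0" "- (qrev c * a) + qrev a * c = 0"
    "- (qrev c * b) + qrev a * d = 1"
    by (auto simp: vI_def)
  have h': "qrev c * a = qrev a * c" "qrev d * b = qrev b * d" "qrev c * b = qrev a * d - 1"
    "qrev d * a = qrev b * c + 1"
    using h by (simp_all add: algebra_simps)
  have u: "u = a*s+b*t" and v: "v = c*s+d*t" using uv fields by auto
  have e1: "qrev v * u = qrev s * (qrev c * a) * s + qrev s * (qrev c * b) * t + qrev t * (qrev d * a) * s
      + qrev t * (qrev d * b) * t"
    by (simp add: u v qrev_mult algebra_simps)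
  have e2: "qrev (qrev v * u) = qrev s * (qrev a * c) * s + qrev t * (qrev b * c) * s + qrev s * (qrev a * d) * t
      + qrev t * (qrev b * d) * t"
    by (simp add: u v qrev_mult algebra_simps)
  have st': "qrev s * t = qrev t * s" using st by (simp add: qrev_mult)
  have e3: "qrev s * (qrev a * d - 1) * t = qrev s * (qrev a * d) * t - qrev s * t"
    "qrev t * (qrev b * c + 1) * s = qrev t * (qrev b * c) * s + qrev t * s"
    by (simp_all add: algebra_simps)
  have "qrev s * (qrev c * a) * s + qrev s * (qrev c * b) * t + qrev t * (qrev d * a) * s
      + qrev t * (qrev d * b) * t = qrev s * (qrev a * c) * s + qrev t * (qrev b * c) * s + qrev s * (qrev a * d) * t
      + qrev t * (qrev b * d) * t"
    unfolding h' e3 st' by (simp add: algebra_simps)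
  then show ?thesis using e1 e2 by simp
qed

lemma mv_nz: "vahlen N \<Longrightarrow> st \<noteq> (0,0) \<Longrightarrow> mv N st \<noteq> (0,0)"
proof
  assume N: "vahlen N" and st: "st \<noteq> (0,0)" and z: "mv N st = (0,0)"
  have "st = mv (mm (vadj N) N) st" by (simp add: vahlen_left[OF N])
  also have "\<dots> = mv (vadj N) (0,0)" by (simp add: mv_mm z)
  also have "\<dots> = (0,0)" by (cases N rule: prod_cases4) simp
  finally show False using st by simp
qed

lemma mob_ptp:
  assumes nz: "(u,v) \<noteq> (0,0)" and p: "v \<noteq> 0 \<Longrightarrow> c12 (u * qinv v) = 0"
  shows "mob M (ptp (u,v)) = ptp (mv M (u,v))"
proof (cases "v = 0")
  case True
  then have u: "u \<noteq> 0" using nz by simp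
  obtain a b c d where M: "M = (a,b,c,d)" by (cases M rule: prod_cases4)
  have "mob M (ptp (u,v)) = ptp (a, c)" using True by (simp add: M)
  also have "\<dots> = ptp (a * u, c * u)" using u by (rule ptp_scale[symmetric])
  also have "\<dots> = ptp (mv M (u,v))" using True by (simp add: M)
  finally show ?thesis .
next
  case False
  define q where "q = u * qinv v"
  have q: "c12 q = 0" using p False by (simp add: q_def)
  have uq: "u = q * v" using False by (simp add: q_def mult.assoc qinv_l)
  obtain a b c d where M: "M = (a,b,c,d)" by (cases M rule: prod_cases4)
  have "mob M (ptp (u,v)) = ptp (mv M (q, 1))" using False by (simp add: q_def[symmetric] mob_of_pv q)
  also have "\<dots> = ptp (a*q+b, c*q+d)" by (simp only: M mv.simps mult_1_right)
  also have "\<dots> = ptp ((a*q+b) * v, (c*q+d) * v)" by (rule ptp_scale[OF False, symmetric])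
  also have "\<dots> = ptp (mv M (u,v))" by (simp add: M uq algebra_simps)
  finally show ?thesis .
qed

lemma mob_mm:
  assumes M: "vahlen M" and N: "vahlen N"
  shows "mob (mm M N) x = mob M (mob N x)"
proof -
  have gen: "mob (mm M N) x = mob M (mob N x)"
    if x1: "mob (mm M N) x = ptp (mv (mm M N) st)" and x2: "mob N x = ptp (mv N st)"
      and st0: "st \<noteq> (0,0)" and stp: "qrev (qrev (snd st) * fst st) = qrev (snd st) * fst st" for st
  proof -
    obtain u v where uv: "mv N st = (u,v)" by (cases "mv N st")
    have nz: "(u,v) \<noteq> (0,0)" using mv_nz[OF N st0] uv by simp
    have pp: "qrev (qrev v * u) = qrev v * u" using para_mv[OF N _ ] stp uv by (cases st) auto
    have "mob M (mob N x) = mob M (ptp (u,v))" using x2 uv by simp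
    also have "\<dots> = ptp (mv M (u,v))" using nz para_q[OF pp] by (intro mob_ptp) auto
    also have "\<dots> = mob (mm M N) x" using x1 uv by (simp add: mv_mm)
    finally show ?thesis by simp
  qed
  show ?thesis
  proof (cases x)
    case (Fin x0 x1 x2)
    then show ?thesis
      by (intro gen[of "(Q x0 x1 x2 0, 1)"]) (simp_all add: fin_of_pv mob_of_pv quat_eq_iff)
  next
    case Inf
    then show ?thesis
      by (intro gen[of "(1, 0)"]) (simp_all add: mob_inf)
  qed
qed

lemma qinv_one[simp]: "qinv 1 = 1" by (simp add: qinv_def quat_eq_iff)

lemma mob_vI[simp]: "mob vI x = x"
  by (cases x) (simp_all add: vI_def of_pv_def)



definition vneg :: "vmat \<Rightarrow> vmat" where "vneg M = (case M of (a,b,c,d) \<Rightarrow> (-a,-b,-c,-d))"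

lemma of_pv_inj: "c12 q = 0 \<Longrightarrow> c12 q' = 0 \<Longrightarrow> of_pv q = of_pv q' \<Longrightarrow> q = q'"
  by (simp add: of_pv_def quat_eq_iff)

lemma of_pv_ne_Inf[simp]: "of_pv q \<noteq> Inf" "Inf \<noteq> of_pv q" by (simp_all add: of_pv_def)

lemma mob_para:
  assumes M: "vahlen M" and q: "c12 q = 0" and uv: "mv M (q,1) = (u,v)" and v: "v \<noteq> 0"
  shows "c12 (u * qinv v) = 0"
proof -
  have "qrev (qrev 1 * q) = qrev 1 * q" using q by (simp add: para_iff)
  from para_q[OF para_mv[OF M this uv] v] show ?thesis .
qed

lemma Q_zero: "Q 0 0 0 0 = 0" and Q_one: "Q 1 0 0 0 = 1" by (simp_all add: quat_eq_iff)

lemma rigid: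
  assumes M: "vahlen M" and L: "line_img (mob M) Lv = Lv" and F: "flag_img (mob M) Fh = Fh"
  shows "M = vI \<or> M = vneg vI"
proof -
  obtain a b c d where Md: "M = (a,b,c,d)" by (cases M rule: prod_cases4)
  define Arc where "Arc = {Fin x y 0 | x y. x\<^sup>2 + y\<^sup>2 = 1 \<and> y > (0::real)}"
  have L1: "mob M (Fin 0 0 0) = Fin 0 0 0" and L2: "mob M Inf = Inf"
    using L by (simp_all add: line_img_def Lv_def)
  have F1: "mob M (Fin 1 0 0) = Fin 1 0 0" and F2: "mob M ` Arc = Arc"
    using F by (simp_all add: flag_img_def Fh_def Arc_def)
  have c: "c = 0" using L2 by (simp add: Md split: if_splits)
  have f0: "Fin 0 0 0 = of_pv 0" by (simp add: of_pv_def)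
  have "ptp (b, d) = of_pv 0" using L1 by (simp add: f0 mob_of_pv Md)
  then have d: "d \<noteq> 0" and bd: "of_pv (b * qinv d) = of_pv 0" by (auto split: if_splits)
  have "c12 (b * qinv d) = 0" using mob_para[OF M, of 0 b d] d by (simp add: Md)
  with bd have "b * qinv d = 0" by (intro of_pv_inj) auto
  moreover have "qinv d \<noteq> 0" using qinv_r[OF d] by auto
  ultimately have b: "b = 0" using no_zero_div by blast
  have f1: "Fin 1 0 0 = of_pv 1" by (simp add: of_pv_def)
  have "ptp (a + b, c + d) = of_pv 1" using F1 by (simp add: f1 mob_of_pv Md)
  then have ad0: "of_pv (a * qinv d) = of_pv 1" using b c d by simp
  have "c12 (a * qinv d) = 0" using mob_para[OF M, of 1 a d] d b c by (simp add: Md)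
  with ad0 have "a * qinv d = 1" by (intro of_pv_inj) auto
  then have ad: "a = d" using d by (metis inv_cancel mult.right_neutral qinv_l)
  have vah: "a * qrev a = 1" using M by (simp add: Md vahlen_def ad b c)
  then have anz: "a \<noteq> 0" by auto
  define E where "E = Q 0 1 0 0"
  have EA: "Fin 0 1 0 \<in> Arc" by (auto simp: Arc_def)
  have "mob M (Fin 0 1 0) \<in> Arc" using F2 EA by blast
  moreover have "mob M (Fin 0 1 0) = of_pv (a * E * qinv a)"
  proof -
    have "mob M (Fin 0 1 0) = ptp (a * E, a)" by (simp add: fin_of_pv mob_of_pv Md b c ad E_def)
    then show ?thesis using anz by simp
  qed
  ultimately obtain x y where xy: "of_pv (a * E * qinv a) = Fin x y 0" "x\<^sup>2 + y\<^sup>2 = 1" "y > 0"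
    unfolding Arc_def by auto
  have p12: "c12 (a * E * qinv a) = 0"
    using mob_para[OF M, of E "a * E" a] anz by (simp add: Md b c ad E_def)
  have p0: "c0 (a * E * qinv a) = 0"
    by (simp add: qinv_alt E_def qconj_def algebra_simps)
  from xy p0 have x0: "x = 0" and yv: "y = c1 (a * E * qinv a)" and z0: "c2 (a * E * qinv a) = 0"
    by (auto simp: of_pv_def)
  have "y\<^sup>2 = 1" using xy(2) x0 by simp
  then have "y = 1 \<or> y = -1" by (simp add: power2_eq_1_iff)
  then have "y = 1" using xy(3) by auto
  then have "a * E * qinv a = E" using p0 p12 z0 yv by (simp add: quat_eq_iff E_def)
  then have comm: "a * E = E * a" by (metis anz inv_cancel mult.assoc mult.right_neutral qinv_l)
  then have a2: "c2 a = 0" "c12 a = 0" by (simp_all add: quat_eq_iff E_def)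
  then have "qrev a = a" by (simp add: para_iff)
  with vah have "a * a = 1" by simp
  then have e: "c0 a * c0 a - c1 a * c1 a = 1" "c0 a * c1 a = 0" using a2 by (simp_all add: quat_eq_iff)
  have c1a: "c1 a = 0"
  proof (rule ccontr)
    assume "c1 a \<noteq> 0"
    then have "c0 a = 0" using e(2) by simp
    then have "- (c1 a * c1 a) = 1" using e(1) by simp
    moreover have "c1 a * c1 a \<ge> 0" by simp
    ultimately show False by linarith
  qed
  with e have "c0 a * c0 a = 1" by simp
  then have "c0 a = 1 \<or> c0 a = -1" by (metis square_eq_1_iff)
  then have "a = 1 \<or> a = -1" using a2 c1a by (auto simp: quat_eq_iff)
  then show ?thesis using Md ad b c by (auto simp: vI_def vneg_def)
qed

lemma line_img_comp: "line_img (f \<circ> g) L = line_img f (line_img g L)" by (simp add: line_img_def)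
lemma flag_img_comp: "flag_img (f \<circ> g) F = flag_img f (flag_img g F)"
  by (cases F) (simp add: flag_img_def image_comp)
lemma mob_vI_fun: "mob vI = id" by (rule ext) simp
lemma line_img_id: "line_img id L = L" by (simp add: line_img_def)
lemma flag_img_id: "flag_img id F = F" by (cases F) (simp add: flag_img_def)

lemma mob_mm_fun: "vahlen M \<Longrightarrow> vahlen N \<Longrightarrow> mob (mm M N) = mob M \<circ> mob N"
  by (rule ext) (simp add: mob_mm)

lemma line_inv: "vahlen D \<Longrightarrow> line_img (mob D) A = B \<Longrightarrow> line_img (mob (vadj D)) B = A"
proof -
  assume D: "vahlen D" and e: "line_img (mob D) A = B"
  have "line_img (mob (vadj D)) B = line_img (mob (mm (vadj D) D)) A"
    using e by (simp add: mob_mm_fun[OF vahlen_adj[OF D] D] line_img_comp)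
  also have "\<dots> = A" by (simp add: vahlen_left[OF D] mob_vI_fun line_img_id)
  finally show ?thesis .
qed

lemma flag_inv: "vahlen D \<Longrightarrow> flag_img (mob D) A = B \<Longrightarrow> flag_img (mob (vadj D)) B = A"
proof -
  assume D: "vahlen D" and e: "flag_img (mob D) A = B"
  have "flag_img (mob (vadj D)) B = flag_img (mob (mm (vadj D) D)) A"
    using e by (simp add: mob_mm_fun[OF vahlen_adj[OF D] D] flag_img_comp)
  also have "\<dots> = A" by (simp add: vahlen_left[OF D] mob_vI_fun flag_img_id)
  finally show ?thesis .
qed

lemma mm_vneg: "mm (vneg vI) Y = vneg Y"
  by (cases Y rule: prod_cases4) (simp add: vneg_def vI_def)

lemma frame_unique:
  assumes X: "vahlen X" and Y: "vahlen Y"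
    and XL: "line_img (mob X) L = Lv" and XF: "flag_img (mob X) F = Fh"
    and YL: "line_img (mob Y) L = Lv" and YF: "flag_img (mob Y) F = Fh"
  shows "X = Y \<or> X = vneg Y"
proof -
  define Z where "Z = mm X (vadj Y)"
  have Z: "vahlen Z" unfolding Z_def by (intro vahlen_mm X vahlen_adj Y)
  have "line_img (mob Z) Lv = Lv"
    unfolding Z_def mob_mm_fun[OF X vahlen_adj[OF Y]] line_img_comp line_inv[OF Y YL] XL ..
  moreover have "flag_img (mob Z) Fh = Fh"
    unfolding Z_def mob_mm_fun[OF X vahlen_adj[OF Y]] flag_img_comp flag_inv[OF Y YF] XF ..
  ultimately have "Z = vI \<or> Z = vneg vI" using rigid[OF Z] by blast
  moreover have "X = mm Z Y" by (simp add: Z_def mm_assoc vahlen_left[OF Y])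
  ultimately show ?thesis using mm_vneg[of Y] by auto
qed



lemma double_cancel: "x + x = y + y \<Longrightarrow> x = (y::quat)"
  by (simp add: quat_eq_iff)

lemma core:
  fixes C1 S1 C2 S2 C3 S3 C4 S4 C5 S5 C6 S6 :: quat
  assumes H: "mm (C1+S1,0,0,C1-S1) (mm (C2,S2,S2,C2) (C3+S3,0,0,C3-S3))
     = vadj (mm (C4,S4,S4,C4) (mm (C5+S5,0,0,C5-S5) (C6,S6,S6,C6)))"
  shows
    "S1 * C2 * S3 + C1 * C2 * C3 = qrev (S4 * C5 * S6 + C4 * C5 * C6) \<and>
     S1 * C2 * C3 + C1 * C2 * S3 = qrev (S4 * S5 * S6 - C4 * S5 * C6) \<and>
     S1 * S2 * S3 - C1 * S2 * C3 = qrev (S4 * C5 * C6 + C4 * C5 * S6) \<and>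
     S1 * S2 * C3 - C1 * S2 * S3 = qrev (S4 * S5 * C6 - C4 * S5 * S6)"
proof -
  define E1 where "E1 = C1+S1" define F1 where "F1 = C1-S1"
  define E3 where "E3 = C3+S3" define F3 where "F3 = C3-S3"
  define E5 where "E5 = C5+S5" define F5 where "F5 = C5-S5"
  define B11 where "B11 = C4*E5*C6 + S4*F5*S6"
  define B12 where "B12 = C4*E5*S6 + S4*F5*C6"
  define B21 where "B21 = S4*E5*C6 + C4*F5*S6"
  define B22 where "B22 = S4*E5*S6 + C4*F5*C6"
  have h: "E1*C2*E3 = qrev B22" "E1*S2*F3 = - qrev B12" "F1*S2*E3 = - qrev B21" "F1*C2*F3 = qrev B11"
    using H unfolding E1_def[symmetric] F1_def[symmetric] E3_def[symmetric] F3_def[symmetric]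
      E5_def[symmetric] F5_def[symmetric]
    by (simp_all add: B11_def B12_def B21_def B22_def mult.assoc)
  have x1: "(S1 * C2 * S3 + C1 * C2 * C3) + (S1 * C2 * S3 + C1 * C2 * C3) = E1*C2*E3 + F1*C2*F3"
    by (simp add: E1_def F1_def E3_def F3_def algebra_simps)
  have y1: "B11 + B22 = (S4 * C5 * S6 + C4 * C5 * C6) + (S4 * C5 * S6 + C4 * C5 * C6)"
    by (simp add: B11_def B22_def E5_def F5_def algebra_simps)
  have x2: "(S1 * C2 * C3 + C1 * C2 * S3) + (S1 * C2 * C3 + C1 * C2 * S3) = E1*C2*E3 - F1*C2*F3"
    by (simp add: E1_def F1_def E3_def F3_def algebra_simps)
  have y2: "B22 - B11 = (S4 * S5 * S6 - C4 * S5 * C6) + (S4 * S5 * S6 - C4 * S5 * C6)"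
    by (simp add: B11_def B22_def E5_def F5_def algebra_simps)
  have x3: "(S1 * S2 * S3 - C1 * S2 * C3) + (S1 * S2 * S3 - C1 * S2 * C3) = - (E1*S2*F3 + F1*S2*E3)"
    by (simp add: E1_def F1_def E3_def F3_def algebra_simps)
  have y3: "B12 + B21 = (S4 * C5 * C6 + C4 * C5 * S6) + (S4 * C5 * C6 + C4 * C5 * S6)"
    by (simp add: B12_def B21_def E5_def F5_def algebra_simps)
  have x4: "(S1 * S2 * C3 - C1 * S2 * S3) + (S1 * S2 * C3 - C1 * S2 * S3) = E1*S2*F3 - F1*S2*E3"
    by (simp add: E1_def F1_def E3_def F3_def algebra_simps)
  have y4: "B21 - B12 = (S4 * S5 * C6 - C4 * S5 * S6) + (S4 * S5 * C6 - C4 * S5 * S6)"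
    by (simp add: B12_def B21_def E5_def F5_def algebra_simps)
  show ?thesis
    apply (intro conjI; rule double_cancel)
       apply (simp only: x1 h qrev_add[symmetric] y1[symmetric]; simp add: add.commute)
      apply (simp only: x2 h qrev_add[symmetric] qrev_diff[symmetric] y2[symmetric])
     apply (simp only: x3 h qrev_add[symmetric] y3[symmetric]; simp add: add.commute)
    apply (simp only: x4 h qrev_add[symmetric] qrev_diff[symmetric] y4[symmetric]; simp add: algebra_simps)
    done
qed



definition sim :: "vmat \<Rightarrow> vmat \<Rightarrow> bool" where "sim X Y \<longleftrightarrow> X = Y \<or> X = vneg Y"

lemma vneg_vneg[simp]: "vneg (vneg X) = X"
  by (cases X rule: prod_cases4) (simp add: vneg_def)
lemma mm_vneg_l: "mm (vneg X) Y = vneg (mm X Y)"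
  by (cases X rule: prod_cases4; cases Y rule: prod_cases4) (simp add: vneg_def)
lemma mm_vneg_r: "mm X (vneg Y) = vneg (mm X Y)"
  by (cases X rule: prod_cases4; cases Y rule: prod_cases4) (simp add: vneg_def)
lemma vadj_vneg: "vadj (vneg X) = vneg (vadj X)"
  by (cases X rule: prod_cases4) (simp add: vneg_def)

lemma sim_refl: "sim X X" by (simp add: sim_def)
lemma sim_sym: "sim X Y \<Longrightarrow> sim Y X" by (auto simp: sim_def)
lemma sim_trans[trans]: "sim X Y \<Longrightarrow> sim Y Z \<Longrightarrow> sim X Z" by (auto simp: sim_def)
lemma sim_mm_l: "sim X Y \<Longrightarrow> sim (mm X Z) (mm Y Z)" by (auto simp: sim_def mm_vneg_l)
lemma sim_mm_r: "sim X Y \<Longrightarrow> sim (mm Z X) (mm Z Y)" by (auto simp: sim_def mm_vneg_r)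
lemma sim_vadj: "sim X Y \<Longrightarrow> sim (vadj X) (vadj Y)" by (auto simp: sim_def vadj_vneg)
lemma sim_mm: "sim X Y \<Longrightarrow> sim Z W \<Longrightarrow> sim (mm X Z) (mm Y W)"
  by (meson sim_mm_l sim_mm_r sim_trans)

lemma step:
  assumes X: "vahlen X" and Mi: "vahlen Mi" and D: "vahlen D"
    and h1: "line_img (mob Mi) L = line_img (mob D) Lv" and h2: "flag_img (mob Mi) F = flag_img (mob D) Fh"
    and h3: "line_img (mob X) L = Lv" and h4: "flag_img (mob X) F = Fh"
  shows "sim X (mm (vadj D) Mi)"
proof -
  have Y: "vahlen (mm (vadj D) Mi)" by (intro vahlen_mm vahlen_adj D Mi)
  have "line_img (mob (mm (vadj D) Mi)) L = Lv"
    unfolding mob_mm_fun[OF vahlen_adj[OF D] Mi] line_img_comp h1 by (rule line_inv[OF D refl])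
  moreover have "flag_img (mob (mm (vadj D) Mi)) F = Fh"
    unfolding mob_mm_fun[OF vahlen_adj[OF D] Mi] flag_img_comp h2 by (rule flag_inv[OF D refl])
  ultimately show ?thesis using frame_unique[OF X Y h3 h4] by (simp add: sim_def)
qed

lemma qinv_uminus: "qinv (- x) = - qinv x" by (simp add: qinv_def quat_eq_iff Let_def)

lemma diag_sim:
  assumes "qexp d = a \<or> qexp d = - a"
  shows "sim (a, 0, 0, qinv (qrev a)) (qcosh d + qsinh d, 0, 0, qcosh d - qsinh d)"
  using assms
proof
  assume "qexp d = a"
  then show ?thesis by (simp add: sim_def qcosh_plus_sinh qcosh_minus_sinh qinv_qrev_exp[symmetric])
next
  assume "qexp d = - a"
  then have "a = - qexp d" by simp
  then show ?thesis
    by (simp add: sim_def vneg_def qcosh_plus_sinh qcosh_minus_sinh qinv_qrev_exp[symmetric] qinv_uminus)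
qed

theorem theorem1p1:
  fixes L1 L3 L5 :: oline and F2 F4 F6 :: oflag
    and d1 d2 d3 d4 d5 d6 :: quat
  assumes "is_oline L1" "is_oline L3" "is_oline L5"
    and "is_oflag F2" "is_oflag F4" "is_oflag F6"
    and "orth L1 F2" "orth L3 F2" "orth L3 F4" "orth L5 F4" "orth L5 F6" "orth L1 F6"
    and "quat_hsl F6 L1 F2 d1" "quat_hsl F2 L3 F4 d3" "quat_hsl F4 L5 F6 d5"
    and "cplx_hsl L1 F2 L3 d2" "cplx_hsl L3 F4 L5 d4" "cplx_hsl L5 F6 L1 d6"
  shows "\<exists>\<epsilon>::quat. (\<epsilon> = 1 \<or> \<epsilon> = - 1) \<and>
    qsinh d1 * qcosh d2 * qsinh d3 + qcosh d1 * qcosh d2 * qcosh d3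
      = \<epsilon> * qrev (qsinh d4 * qcosh d5 * qsinh d6 + qcosh d4 * qcosh d5 * qcosh d6) \<and>
    qsinh d1 * qcosh d2 * qcosh d3 + qcosh d1 * qcosh d2 * qsinh d3
      = \<epsilon> * qrev (qsinh d4 * qsinh d5 * qsinh d6 - qcosh d4 * qsinh d5 * qcosh d6) \<and>
    qsinh d1 * qsinh d2 * qsinh d3 - qcosh d1 * qsinh d2 * qcosh d3
      = \<epsilon> * qrev (qsinh d4 * qcosh d5 * qcosh d6 + qcosh d4 * qcosh d5 * qsinh d6) \<and>
    qsinh d1 * qsinh d2 * qcosh d3 - qcosh d1 * qsinh d2 * qsinh d3
      = \<epsilon> * qrev (qsinh d4 * qsinh d5 * qcosh d6 - qcosh d4 * qsinh d5 * qsinh d6)"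
proof -
  from assms(13) obtain Mi1 a1 where m1: "vahlen Mi1" "line_img (mob Mi1) L1 = Lv" "flag_img (mob Mi1) F6 = Fh"
    "vahlen (a1, 0, 0, qinv (qrev a1))" "line_img (mob (a1, 0, 0, qinv (qrev a1))) Lv = Lv"
    "flag_img (mob (a1, 0, 0, qinv (qrev a1))) Fh = flag_img (mob Mi1) F2" "qexp d1 = a1 \<or> qexp d1 = - a1"
    unfolding quat_hsl_def by blast
  from assms(14) obtain Mi3 a3 where m3: "vahlen Mi3" "line_img (mob Mi3) L3 = Lv" "flag_img (mob Mi3) F2 = Fh"
    "vahlen (a3, 0, 0, qinv (qrev a3))" "line_img (mob (a3, 0, 0, qinv (qrev a3))) Lv = Lv"
    "flag_img (mob (a3, 0, 0, qinv (qrev a3))) Fh = flag_img (mob Mi3) F4" "qexp d3 = a3 \<or> qexp d3 = - a3"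
    unfolding quat_hsl_def by blast
  from assms(15) obtain Mi5 a5 where m5: "vahlen Mi5" "line_img (mob Mi5) L5 = Lv" "flag_img (mob Mi5) F4 = Fh"
    "vahlen (a5, 0, 0, qinv (qrev a5))" "line_img (mob (a5, 0, 0, qinv (qrev a5))) Lv = Lv"
    "flag_img (mob (a5, 0, 0, qinv (qrev a5))) Fh = flag_img (mob Mi5) F6" "qexp d5 = a5 \<or> qexp d5 = - a5"
    unfolding quat_hsl_def by blast
  define C2 where "C2 = (qcosh d2, qsinh d2, qsinh d2, qcosh d2)"
  define C4 where "C4 = (qcosh d4, qsinh d4, qsinh d4, qcosh d4)"
  define C6 where "C6 = (qcosh d6, qsinh d6, qsinh d6, qcosh d6)"
  from assms(16) obtain Mi2 where m2: "vahlen Mi2" "flag_img (mob Mi2) F2 = Fh" "line_img (mob Mi2) L1 = Lv"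
    "vahlen C2" "flag_img (mob C2) Fh = Fh" "line_img (mob C2) Lv = line_img (mob Mi2) L3"
    unfolding cplx_hsl_def C2_def by blast
  from assms(17) obtain Mi4 where m4: "vahlen Mi4" "flag_img (mob Mi4) F4 = Fh" "line_img (mob Mi4) L3 = Lv"
    "vahlen C4" "flag_img (mob C4) Fh = Fh" "line_img (mob C4) Lv = line_img (mob Mi4) L5"
    unfolding cplx_hsl_def C4_def by blast
  from assms(18) obtain Mi6 where m6: "vahlen Mi6" "flag_img (mob Mi6) F6 = Fh" "line_img (mob Mi6) L5 = Lv"
    "vahlen C6" "flag_img (mob C6) Fh = Fh" "line_img (mob C6) Lv = line_img (mob Mi6) L1"
    unfolding cplx_hsl_def C6_def by blast
  define D1 :: vmat where "D1 = (a1, 0, 0, qinv (qrev a1))"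
  define D3 :: vmat where "D3 = (a3, 0, 0, qinv (qrev a3))"
  define D5 :: vmat where "D5 = (a5, 0, 0, qinv (qrev a5))"
  note m1 = m1[folded D1_def] and m3 = m3[folded D3_def] and m5 = m5[folded D5_def]
  have r2: "sim Mi2 (mm (vadj D1) Mi1)"
    by (rule step[OF m2(1) m1(1) m1(4), where L=L1 and F=F2]) (simp_all add: m1 m2)
  have r3: "sim Mi3 (mm (vadj C2) Mi2)"
    by (rule step[OF m3(1) m2(1) m2(4), where L=L3 and F=F2]) (simp_all add: m2 m3)
  have r4: "sim Mi4 (mm (vadj D3) Mi3)"
    by (rule step[OF m4(1) m3(1) m3(4), where L=L3 and F=F4]) (simp_all add: m3 m4)
  have r5: "sim Mi5 (mm (vadj C4) Mi4)"
    by (rule step[OF m5(1) m4(1) m4(4), where L=L5 and F=F4]) (simp_all add: m4 m5)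
  have r6: "sim Mi6 (mm (vadj D5) Mi5)"
    by (rule step[OF m6(1) m5(1) m5(4), where L=L5 and F=F6]) (simp_all add: m5 m6)
  have r1: "sim Mi1 (mm (vadj C6) Mi6)"
    by (rule step[OF m1(1) m6(1) m6(4), where L=L1 and F=F6]) (simp_all add: m6 m1)
  define P where "P = mm D1 (mm C2 (mm D3 (mm C4 (mm D5 C6))))"
  have "sim Mi1 (mm (vadj C6) (mm (vadj D5) (mm (vadj C4) (mm (vadj D3) (mm (vadj C2) (mm (vadj D1) Mi1))))))"
    by (meson r1 r2 r3 r4 r5 r6 sim_mm_r sim_trans)
  also have "mm (vadj C6) (mm (vadj D5) (mm (vadj C4) (mm (vadj D3) (mm (vadj C2) (mm (vadj D1) Mi1)))))
      = mm (vadj P) Mi1"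
    by (simp add: P_def vadj_mm mm_assoc)
  finally have "sim (mm Mi1 (vadj Mi1)) (mm (mm (vadj P) Mi1) (vadj Mi1))" by (rule sim_mm_l)
  then have "sim vI (vadj P)"
    using m1(1) unfolding vahlen_iff by (simp add: mm_assoc)
  then have sP: "sim vI P" using sim_vadj by fastforce
  define A where "A = mm D1 (mm C2 D3)"
  define B where "B = mm C4 (mm D5 C6)"
  have Bv: "vahlen B" unfolding B_def by (intro vahlen_mm m4(4) m5(4) m6(4))
  have "P = mm A B" by (simp add: P_def A_def B_def mm_assoc)
  with sP have "sim (mm vI (vadj B)) (mm (mm A B) (vadj B))" by (intro sim_mm_l) simp
  then have sAB: "sim A (vadj B)"
    using Bv unfolding vahlen_iff by (simp add: mm_assoc sim_sym)
  define E where "E = (\<lambda>d. (qcosh d + qsinh d, 0::quat, 0::quat, qcosh d - qsinh d))"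
  have s1: "sim D1 (E d1)" unfolding D1_def E_def by (rule diag_sim[OF m1(7)])
  have s3: "sim D3 (E d3)" unfolding D3_def E_def by (rule diag_sim[OF m3(7)])
  have s5: "sim D5 (E d5)" unfolding D5_def E_def by (rule diag_sim[OF m5(7)])
  have "sim (mm (E d1) (mm C2 (E d3))) A"
    unfolding A_def by (intro sim_mm sim_refl s1[THEN sim_sym] s3[THEN sim_sym])
  also have "sim A (vadj B)" by (rule sAB)
  also have "sim (vadj B) (vadj (mm C4 (mm (E d5) C6)))"
    unfolding B_def by (intro sim_vadj sim_mm sim_refl s5)
  finally have fin: "sim (mm (E d1) (mm C2 (E d3))) (vadj (mm C4 (mm (E d5) C6)))" .
  show ?thesis
  proof (cases "mm (E d1) (mm C2 (E d3)) = vadj (mm C4 (mm (E d5) C6))")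
    case True
    from core[OF True[unfolded E_def C2_def C4_def C6_def]]
    show ?thesis by (intro exI[of _ 1]) simp
  next
    case False
    with fin have eq: "mm (E d1) (mm C2 (E d3)) = vneg (vadj (mm C4 (mm (E d5) C6)))"
      by (simp add: sim_def)
    have "mm ((- qcosh d1) + (- qsinh d1), 0, 0, (- qcosh d1) - (- qsinh d1)) (mm C2 (E d3))
        = vneg (mm (E d1) (mm C2 (E d3)))"
      by (simp add: E_def C2_def vneg_def algebra_simps)
    also have "\<dots> = vadj (mm C4 (mm (E d5) C6))" by (simp add: eq)
    finally have H: "mm ((- qcosh d1) + (- qsinh d1), 0, 0, (- qcosh d1) - (- qsinh d1)) (mm C2 (E d3))
        = vadj (mm C4 (mm (E d5) C6))" .
    note c = core[OF H[unfolded E_def C2_def C4_def C6_def]]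
    have nh: "\<And>x x' y. x' = y \<Longrightarrow> x = - x' \<Longrightarrow> x = -1 * (y::quat)" by simp
    show ?thesis
      apply (intro exI[of _ "-1"] conjI)
          apply simp
         apply (rule nh[OF c[THEN conjunct1]]; simp add: algebra_simps)
        apply (rule nh[OF c[THEN conjunct2, THEN conjunct1]]; simp add: algebra_simps)
       apply (rule nh[OF c[THEN conjunct2, THEN conjunct2, THEN conjunct1]]; simp add: algebra_simps)
      apply (rule nh[OF c[THEN conjunct2, THEN conjunct2, THEN conjunct2]]; simp add: algebra_simps)
      done
  qed
qed


end
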